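(* There is a deterministic max-finding algorithm that, given $n$ elements, uses $O(n)$ comparisons and outputs an element $x$ with $x \ge x^* - \log_2\log_2 n$, where $x^*$ is the maximum value of an input element (i.e., it has error at most $\log_2\log_2 n$).
   Context: Model of imprecise comparisons: there are $n$ elements, each with a fixed unknown real value; we identify an element with its value. Asked to compare $x_i$ and $x_j$, the comparator answers either "$x_i \ge x_j$" or "$x_j \ge x_i$". If $|x_i-x_j|>1$ the answer is correct; if $|x_i-x_j|\le 1$ the answer is arbitrary (possibly adversarial and adaptive). The guarantee and comparison bound hold for every input and every comparator behaviour consistent with these rules. *)

theory Defs
  imports Complex_Main
begin

text \<open>A deterministic comparison-based algorithm on elements indexed 0..n-1 is a
decision tree. Node Compare i j t1 t2 asks the comparator about elements i and j;
answer "x_i >= x_j" continues with t1, answer "x_j >= x_i" continues with t2.\<close>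

datatype ctree = Output nat | Compare nat nat ctree ctree

fun valid_tree :: "nat \<Rightarrow> ctree \<Rightarrow> bool" where
  "valid_tree n (Output k) = (k < n)"
| "valid_tree n (Compare i j t1 t2) = (i < n \<and> j < n \<and> valid_tree n t1 \<and> valid_tree n t2)"

text \<open>Since the algorithm is deterministic, an (adaptive,
adversarial) comparator corresponds exactly to a choice of a consistent
root-to-leaf path. run x t k c: some consistent comparator behaviour makes t output
element k after exactly c comparisons.\<close>
inductive run :: "(nat \<Rightarrow> real) \<Rightarrow> ctree \<Rightarrow> nat \<Rightarrow> nat \<Rightarrow> bool" where
  run_out: "run x (Output k) k 0"
| run_ge: "\<not> (x j - x i > 1) \<Longrightarrow> run x t1 k c \<Longrightarrow> run x (Compare i j t1 t2) k (Suc c)"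
| run_le: "\<not> (x i - x j > 1) \<Longrightarrow> run x t2 k c \<Longrightarrow> run x (Compare i j t1 t2) k (Suc c)"

end

theory Submission
  imports Defs
begin


datatype 'a prog = Ret 'a | Ask nat nat "'a prog" "'a prog"

primrec bindp :: "'a prog \<Rightarrow> ('a \<Rightarrow> 'b prog) \<Rightarrow> 'b prog" where
  "bindp (Ret a) f = f a"
| "bindp (Ask i j p q) f = Ask i j (bindp p f) (bindp q f)"

primrec to_tree :: "nat prog \<Rightarrow> ctree" where
  "to_tree (Ret a) = Output a"
| "to_tree (Ask i j p q) = Compare i j (to_tree p) (to_tree q)"

inductive ex :: "(nat \<Rightarrow> real) \<Rightarrow> 'a prog \<Rightarrow> 'a \<Rightarrow> nat \<Rightarrow> bool" where
  ex_ret: "ex x (Ret a) a 0"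
| ex_ge: "\<not> (x j - x i > 1) \<Longrightarrow> ex x p a c \<Longrightarrow> ex x (Ask i j p q) a (Suc c)"
| ex_le: "\<not> (x i - x j > 1) \<Longrightarrow> ex x q a c \<Longrightarrow> ex x (Ask i j p q) a (Suc c)"

inductive_cases ex_RetE: "ex x (Ret a) b c"
inductive_cases ex_AskE: "ex x (Ask i j p q) b c"
inductive_cases run_OutE: "run x (Output a) b c"
inductive_cases run_CmpE: "run x (Compare i j p q) b c"

lemma ex_Ask_iff: "ex x (Ask i j p q) b c \<longleftrightarrow>
  (\<exists>c'. c = Suc c' \<and> ((\<not> (x j - x i > 1) \<and> ex x p b c') \<or> (\<not> (x i - x j > 1) \<and> ex x q b c')))"
  by (auto elim: ex_AskE intro: ex.intros)

lemma run_ex: "run x (to_tree p) k c \<Longrightarrow> ex x p k c"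
proof (induction p arbitrary: c)
  case (Ret a) then show ?case by (auto elim: run_OutE intro: ex.intros)
next
  case (Ask i j p q) then show ?case by (auto elim!: run_CmpE intro: ex.intros)
qed

lemma ex_bind: "ex x (bindp p f) r c \<Longrightarrow> \<exists>a c1 c2. ex x p a c1 \<and> ex x (f a) r c2 \<and> c = c1 + c2"
proof (induction p arbitrary: c)
  case (Ret a) then show ?case by simp (metis ex_ret add_0)
next
  case (Ask i j p q)
  from Ask.prems obtain c' where cc: "c = Suc c'" and
    d: "(\<not> (x j - x i > 1) \<and> ex x (bindp p f) r c') \<or> (\<not> (x i - x j > 1) \<and> ex x (bindp q f) r c')"
    by (auto simp: ex_Ask_iff)
  from d show ?case
  proof
    assume h: "\<not> (x j - x i > 1) \<and> ex x (bindp p f) r c'"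
    then obtain a c1 c2 where "ex x p a c1" "ex x (f a) r c2" "c' = c1 + c2" using Ask.IH(1) by blast
    then show ?thesis using h cc by (intro exI[of _ a] exI[of _ "Suc c1"] exI[of _ c2]) (auto intro: ex.intros)
  next
    assume h: "\<not> (x i - x j > 1) \<and> ex x (bindp q f) r c'"
    then obtain a c1 c2 where "ex x q a c1" "ex x (f a) r c2" "c' = c1 + c2" using Ask.IH(2) by blast
    then show ?thesis using h cc by (intro exI[of _ a] exI[of _ "Suc c1"] exI[of _ c2]) (auto intro: ex.intros)
  qed
qed

primrec inb :: "nat \<Rightarrow> ('a \<Rightarrow> bool) \<Rightarrow> 'a prog \<Rightarrow> bool" where
  "inb n P (Ret a) = P a"
| "inb n P (Ask i j p q) = (i < n \<and> j < n \<and> inb n P p \<and> inb n P q)"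

lemma inb_bind: "inb n P p \<Longrightarrow> (\<And>a. P a \<Longrightarrow> inb n Q (f a)) \<Longrightarrow> inb n Q (bindp p f)"
  by (induction p) auto

lemma inb_valid: "inb n (\<lambda>r. r < n) p \<Longrightarrow> valid_tree n (to_tree p)"
  by (induction p) auto

primrec cmp_all :: "nat \<Rightarrow> nat list \<Rightarrow> (nat \<times> nat) list prog" where
  "cmp_all a [] = Ret []"
| "cmp_all a (b # L) = Ask a b (bindp (cmp_all a L) (\<lambda>R. Ret ((a,b) # R)))
                                (bindp (cmp_all a L) (\<lambda>R. Ret ((b,a) # R)))"

primrec rr :: "nat list \<Rightarrow> (nat \<times> nat) list prog" where
  "rr [] = Ret []"
| "rr (a # L) = bindp (cmp_all a L) (\<lambda>R1. bindp (rr L) (\<lambda>R2. Ret (R1 @ R2)))"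

definition sound :: "(nat \<Rightarrow> real) \<Rightarrow> (nat \<times> nat) list \<Rightarrow> bool" where
  "sound x R \<longleftrightarrow> (\<forall>(a,b)\<in>set R. x b \<le> x a + 1)"

definition ttotal :: "nat list \<Rightarrow> (nat \<times> nat) list \<Rightarrow> bool" where
  "ttotal L R \<longleftrightarrow> (\<forall>a\<in>set L. \<forall>b\<in>set L. a \<noteq> b \<longrightarrow> (a,b) \<in> set R \<or> (b,a) \<in> set R)"

lemma cmp_all_spec: "ex x (cmp_all a L) R c \<Longrightarrow>
   c = length L \<and> (\<forall>b\<in>set L. (a,b) \<in> set R \<or> (b,a) \<in> set R) \<and> sound x R"
proof (induction L arbitrary: R c)
  case Nil then show ?case by (auto elim: ex_RetE simp: sound_def)
next
  case (Cons b L)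
  from Cons.prems obtain c' where cc: "c = Suc c'" and
    d: "(\<not> (x b - x a > 1) \<and> ex x (bindp (cmp_all a L) (\<lambda>R. Ret ((a,b) # R))) R c') \<or>
        (\<not> (x a - x b > 1) \<and> ex x (bindp (cmp_all a L) (\<lambda>R. Ret ((b,a) # R))) R c')"
    by (auto simp: ex_Ask_iff)
  from d show ?case
  proof
    assume h: "\<not> (x b - x a > 1) \<and> ex x (bindp (cmp_all a L) (\<lambda>R. Ret ((a,b) # R))) R c'"
    then obtain R1 c1 c2 where h1: "ex x (cmp_all a L) R1 c1" "ex x (Ret ((a,b)#R1)) R c2" "c' = c1 + c2"
      using ex_bind[OF conjunct2[OF h]] by auto
    then show ?thesis using Cons.IH[OF h1(1)] h cc by (auto elim!: ex_RetE simp: sound_def)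
  next
    assume h: "\<not> (x a - x b > 1) \<and> ex x (bindp (cmp_all a L) (\<lambda>R. Ret ((b,a) # R))) R c'"
    then obtain R1 c1 c2 where h1: "ex x (cmp_all a L) R1 c1" "ex x (Ret ((b,a)#R1)) R c2" "c' = c1 + c2"
      using ex_bind[OF conjunct2[OF h]] by auto
    then show ?thesis using Cons.IH[OF h1(1)] h cc by (auto elim!: ex_RetE simp: sound_def)
  qed
qed

lemma rr_spec: "ex x (rr L) R c \<Longrightarrow> c \<le> (length L)^2 \<and> ttotal L R \<and> sound x R"
proof (induction L arbitrary: R c)
  case Nil then show ?case by (auto elim: ex_RetE simp: sound_def ttotal_def)
next
  case (Cons a L)
  from ex_bind[OF Cons.prems[simplified]] obtain R1 c1 c2 where
    h1: "ex x (cmp_all a L) R1 c1" and h2: "ex x (bindp (rr L) (\<lambda>R2. Ret (R1 @ R2))) R c2" and c: "c = c1 + c2"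
    by auto
  from ex_bind[OF h2] obtain R2 c3 c4 where h3: "ex x (rr L) R2 c3" and h4: "ex x (Ret (R1 @ R2)) R c4"
    and c2: "c2 = c3 + c4" by auto
  have R: "R = R1 @ R2" "c4 = 0" using h4 by (auto elim: ex_RetE)
  note A = cmp_all_spec[OF h1] and B = Cons.IH[OF h3]
  have "c \<le> length L + (length L)^2" using A B c c2 R by auto
  also have "\<dots> \<le> (length (a#L))^2" by (simp add: power2_eq_square)
  finally have "c \<le> (length (a#L))^2" .
  moreover have "ttotal (a#L) R" using A B R unfolding ttotal_def by auto
  moreover have "sound x R" using A B R unfolding sound_def by auto
  ultimately show ?case by blast
qed

lemma inb_cmp_all: "a < n \<Longrightarrow> set L \<subseteq> {..<n} \<Longrightarrow> inb n (\<lambda>_. True) (cmp_all a L)"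
  by (induction L) (auto intro!: inb_bind)

lemma inb_rr: "set L \<subseteq> {..<n} \<Longrightarrow> inb n (\<lambda>_. True) (rr L)"
  by (induction L) (auto intro!: inb_bind inb_cmp_all)



lemma outdeg:
  assumes fin: "finite V" and ne: "V \<noteq> {}"
    and tot: "\<forall>a\<in>V. \<forall>b\<in>V. a \<noteq> b \<longrightarrow> T a b \<or> T b a"
  shows "\<exists>v\<in>V. card V \<le> 2 * card {u\<in>V. u \<noteq> v \<and> T v u} + 1"
proof (rule ccontr)
  assume "\<not> ?thesis"
  hence lt: "\<forall>v\<in>V. 2 * card {u\<in>V. u \<noteq> v \<and> T v u} + 2 \<le> card V" by auto
  define P where "P = Sigma V (\<lambda>a. {u\<in>V. u \<noteq> a \<and> T a u})"
  define Q where "Q = Sigma V (\<lambda>a. V - {a})"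
  have cP: "card P = (\<Sum>a\<in>V. card {u\<in>V. u \<noteq> a \<and> T a u})"
    unfolding P_def using fin by (subst card_SigmaI) auto
  have cQ: "card Q = (\<Sum>a\<in>V. card V - 1)"
    unfolding Q_def using fin by (subst card_SigmaI) auto
  have "Q \<subseteq> P \<union> prod.swap ` P"
  proof
    fix p assume "p \<in> Q"
    then obtain a b where p: "p = (a,b)" "a \<in> V" "b \<in> V" "a \<noteq> b" unfolding Q_def by auto
    show "p \<in> P \<union> prod.swap ` P"
    proof (cases "T a b")
      case True then show ?thesis using p unfolding P_def by auto
    next
      case False
      hence "T b a" using tot p by blast
      hence "(b,a) \<in> P" using p unfolding P_def by auto
      moreover have "p = prod.swap (b,a)" using p by simp
      ultimately show ?thesis by blast
    qed
  qed
  hence "card Q \<le> card (P \<union> prod.swap ` P)"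
    by (intro card_mono) (auto simp: P_def fin)
  also have "\<dots> \<le> card P + card (prod.swap ` P)" by (rule card_Un_le)
  also have "\<dots> \<le> 2 * card P" using card_image_le[of P prod.swap] by (auto simp: P_def fin)
  finally have A: "card Q \<le> 2 * card P" .
  have "2 * card P = (\<Sum>a\<in>V. 2 * card {u\<in>V. u \<noteq> a \<and> T a u})" by (simp add: cP sum_distrib_left)
  also have "\<dots> \<le> (\<Sum>a\<in>V. card V - 2)" using lt by (intro sum_mono) auto
  finally have "card Q \<le> (\<Sum>a\<in>V. card V - 2)" using A by linarith
  hence "card V * (card V - 1) \<le> card V * (card V - 2)" using cQ by simp
  moreover have "card V \<ge> 2" using lt ne by fastforce
  moreover have "card V * (card V - 2) < card V * (card V - 1)"
    using \<open>card V \<ge> 2\<close> by (intro mult_strict_left_mono) auto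
  ultimately show False by linarith
qed

lemma domset_exists:
  "finite V \<Longrightarrow> (\<forall>a\<in>V. \<forall>b\<in>V. a \<noteq> b \<longrightarrow> T a b \<or> T b a) \<Longrightarrow> card V < 2^k \<Longrightarrow>
   \<exists>K\<subseteq>V. card K \<le> k \<and> (\<forall>v\<in>V. v \<in> K \<or> (\<exists>u\<in>K. T u v))"
proof (induction k arbitrary: V)
  case 0 then show ?case by auto
next
  case (Suc k)
  show ?case
  proof (cases "V = {}")
    case True then show ?thesis by auto
  next
    case False
    obtain v where v: "v \<in> V" and dv: "card V \<le> 2 * card {u\<in>V. u \<noteq> v \<and> T v u} + 1"
      using outdeg[OF Suc.prems(1) False Suc.prems(2)] by blast
    define U where "U = {u\<in>V. u \<noteq> v \<and> \<not> T v u}"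
    define W where "W = {u\<in>V. u \<noteq> v \<and> T v u}"
    have disj: "U \<inter> W = {}" and un: "U \<union> W = V - {v}" unfolding U_def W_def using v by auto
    have finU: "finite U" "finite W" using Suc.prems(1) unfolding U_def W_def by auto
    have "card U + card W = card V - 1"
      using card_Un_disjoint[OF finU disj] un Suc.prems(1) v by simp
    hence "2 * card U < 2 ^ Suc k" using dv Suc.prems(3) unfolding W_def by simp
    hence cU: "card U < 2 ^ k" by simp
    obtain K where K: "K \<subseteq> U" "card K \<le> k" "\<forall>w\<in>U. w \<in> K \<or> (\<exists>u\<in>K. T u w)"
      using Suc.IH[OF finU(1) _ cU] Suc.prems(2) unfolding U_def by blast
    have "finite K" using K(1) finU(1) finite_subset by blast
    have "insert v K \<subseteq> V" using K(1) v unfolding U_def by auto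
    moreover have "card (insert v K) \<le> Suc k" using card_insert_le[of K v] K(2) \<open>finite K\<close>
      by (simp add: card_insert_if)
    moreover have "\<forall>w\<in>V. w \<in> insert v K \<or> (\<exists>u\<in>insert v K. T u w)"
    proof
      fix w assume w: "w \<in> V"
      show "w \<in> insert v K \<or> (\<exists>u\<in>insert v K. T u w)"
      proof (cases "w = v \<or> T v w")
        case True then show ?thesis by auto
      next
        case False
        hence "w \<in> U" using w unfolding U_def by auto
        then show ?thesis using K(3) by blast
      qed
    qed
    ultimately show ?thesis by blast
  qed
qed



definition dgood :: "nat \<Rightarrow> (nat \<times> nat) list \<Rightarrow> nat list \<Rightarrow> nat list \<Rightarrow> bool" where
  "dgood k R Ch K \<longleftrightarrow> set K \<subseteq> set Ch \<and> distinct K \<and> length K \<le> Suc k \<and>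
     (\<forall>v\<in>set Ch. v \<in> set K \<or> (\<exists>u\<in>set K. (u,v) \<in> set R))"

definition domset :: "nat \<Rightarrow> (nat \<times> nat) list \<Rightarrow> nat list \<Rightarrow> nat list" where
  "domset k R Ch = (if \<exists>K. dgood k R Ch K then SOME K. dgood k R Ch K else [])"

lemma domset_sub: "set (domset k R Ch) \<subseteq> set Ch"
proof (cases "\<exists>K. dgood k R Ch K")
  case True
  have "dgood k R Ch (SOME K. dgood k R Ch K)" using someI_ex[OF True] .
  hence "set (SOME K. dgood k R Ch K) \<subseteq> set Ch" unfolding dgood_def by blast
  then show ?thesis by (simp add: domset_def True)
qed (simp add: domset_def)

lemma domset_good:
  assumes "ttotal Ch R" "length Ch \<le> 2^k"
  shows "dgood k R Ch (domset k R Ch)"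
proof -
  have "(0::nat) < 2^k" by simp
  moreover have "card (set Ch) \<le> 2^k" using card_length[of Ch] assms(2) by linarith
  ultimately have "card (set Ch) < 2^Suc k" by (simp only: power_Suc)
  then obtain K where K: "K \<subseteq> set Ch" "card K \<le> Suc k" "\<forall>v\<in>set Ch. v \<in> K \<or> (\<exists>u\<in>K. (u,v) \<in> set R)"
    using domset_exists[of "set Ch" "\<lambda>a b. (a,b) \<in> set R" "Suc k"] assms(1) unfolding ttotal_def by auto
  have "finite K" using K(1) finite_subset by blast
  then obtain Kl where Kl: "set Kl = K" "distinct Kl" using finite_distinct_list by blast
  have "dgood k R Ch Kl" unfolding dgood_def using K Kl distinct_card[OF Kl(2)] by auto
  hence ex: "\<exists>K. dgood k R Ch K" by blast
  show ?thesis unfolding domset_def using someI_ex[OF ex] ex by simp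
qed

fun chunks :: "nat \<Rightarrow> 'a list \<Rightarrow> 'a list list" where
  "chunks g [] = []"
| "chunks g (a # L) = take (Suc g) (a # L) # chunks g (drop (Suc g) (a # L))"

lemma concat_chunks: "concat (chunks g L) = L"
  by (induction g L rule: chunks.induct) auto

lemma chunks_len: "C \<in> set (chunks g L) \<Longrightarrow> length C \<le> Suc g"
  by (induction g L rule: chunks.induct) auto

lemma chunks_num: "length (chunks g L) * Suc g \<le> length L + g"
proof (induction g L rule: chunks.induct)
  case (1 g) then show ?case by simp
next
  case (2 g a L)
  show ?case
  proof (cases "length L \<ge> g")
    case True
    then show ?thesis using 2 by (simp add: algebra_simps)
  next
    case False
    hence "drop g L = []" by simp
    then show ?thesis by simp
  qed
qed

primrec lev :: "nat \<Rightarrow> nat list list \<Rightarrow> nat list prog" where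
  "lev k [] = Ret []"
| "lev k (Ch # Cs) = bindp (rr Ch) (\<lambda>R. bindp (lev k Cs) (\<lambda>S. Ret (domset k R Ch @ S)))"

lemma lev_spec:
  "ex x (lev k Cs) S c \<Longrightarrow> (\<forall>Ch\<in>set Cs. length Ch \<le> 2^k) \<Longrightarrow>
    c \<le> 2^k * length (concat Cs) \<and> length S \<le> length Cs * Suc k \<and> length S \<le> length (concat Cs)
    \<and> set S \<subseteq> set (concat Cs) \<and> (\<forall>v\<in>set (concat Cs). \<exists>u\<in>set S. x v \<le> x u + 1)"
proof (induction Cs arbitrary: S c)
  case Nil then show ?case by (auto elim: ex_RetE)
next
  case (Cons Ch Cs)
  from ex_bind[OF Cons.prems(1)[simplified]] obtain R c1 c2 where
    h1: "ex x (rr Ch) R c1" and h2: "ex x (bindp (lev k Cs) (\<lambda>S. Ret (domset k R Ch @ S))) S c2"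
    and c: "c = c1 + c2" by auto
  from ex_bind[OF h2] obtain S2 c3 c4 where h3: "ex x (lev k Cs) S2 c3"
    and h4: "ex x (Ret (domset k R Ch @ S2)) S c4" and c2: "c2 = c3 + c4" by auto
  have S: "S = domset k R Ch @ S2" "c4 = 0" using h4 by (auto elim: ex_RetE)
  note A = rr_spec[OF h1] and B = Cons.IH[OF h3] 
  have lc: "length Ch \<le> 2^k" using Cons.prems(2) by simp
  have B': "c3 \<le> 2^k * length (concat Cs) \<and> length S2 \<le> length Cs * Suc k \<and> length S2 \<le> length (concat Cs)
    \<and> set S2 \<subseteq> set (concat Cs) \<and> (\<forall>v\<in>set (concat Cs). \<exists>u\<in>set S2. x v \<le> x u + 1)"
    using B Cons.prems(2) by simp
  have G: "dgood k R Ch (domset k R Ch)" using domset_good A lc by blast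
  have "c1 \<le> length Ch * length Ch" using A by (simp add: power2_eq_square)
  also have "\<dots> \<le> 2^k * length Ch" using lc by simp
  finally have c1: "c1 \<le> 2^k * length Ch" .
  have ld: "length (domset k R Ch) \<le> length Ch"
    using G distinct_card[of "domset k R Ch"] card_mono[of "set Ch" "set (domset k R Ch)"] card_length[of Ch]
    unfolding dgood_def by auto
  have dom: "\<forall>v\<in>set Ch. \<exists>u\<in>set (domset k R Ch). x v \<le> x u + 1"
  proof
    fix v assume v: "v \<in> set Ch"
    show "\<exists>u\<in>set (domset k R Ch). x v \<le> x u + 1"
    proof (cases "v \<in> set (domset k R Ch)")
      case True then show ?thesis by force
    next
      case False
      then obtain u where "u \<in> set (domset k R Ch)" "(u,v) \<in> set R" using G v unfolding dgood_def by blast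
      then show ?thesis using A unfolding sound_def by blast
    qed
  qed
  have dom2: "\<forall>v\<in>set (concat (Ch # Cs)). \<exists>u\<in>set S. x v \<le> x u + 1"
  proof
    fix v assume "v \<in> set (concat (Ch # Cs))"
    then consider "v \<in> set Ch" | "v \<in> set (concat Cs)" by auto
    then show "\<exists>u\<in>set S. x v \<le> x u + 1"
    proof cases
      case 1 then show ?thesis using dom S by auto
    next
      case 2
      then obtain u where "u \<in> set S2" "x v \<le> x u + 1" using B' by blast
      then show ?thesis using S by auto
    qed
  qed
  show ?case
    using B' c c1 c2 S G ld dom2 unfolding dgood_def by (auto simp: algebra_simps)
qed

lemma inb_lev: "(\<forall>Ch\<in>set Cs. set Ch \<subseteq> {..<n}) \<Longrightarrow> inb n (\<lambda>S. set S \<subseteq> {..<n}) (lev k Cs)"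
proof (induction Cs)
  case (Cons Ch Cs)
  have "\<And>R. set (domset k R Ch) \<subseteq> {..<n}" using Cons.prems domset_sub[of k _ Ch] by auto
  then show ?case using Cons
    by (auto intro!: inb_bind inb_rr)
qed simp



definition wins :: "(nat \<times> nat) list \<Rightarrow> nat list \<Rightarrow> nat \<Rightarrow> nat" where
  "wins R L v = card {u\<in>set L. u \<noteq> v \<and> (v,u) \<in> set R}"

definition pick :: "(nat \<times> nat) list \<Rightarrow> nat list \<Rightarrow> nat" where
  "pick R L = (if L = [] then 0 else SOME r. r \<in> set L \<and> (\<forall>v\<in>set L. wins R L v \<le> wins R L r))"

lemma pick_prop: "L \<noteq> [] \<Longrightarrow> pick R L \<in> set L \<and> (\<forall>v\<in>set L. wins R L v \<le> wins R L (pick R L))"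
proof -
  assume ne: "L \<noteq> []"
  define m where "m = Max (wins R L ` set L)"
  have "m \<in> wins R L ` set L" unfolding m_def using ne by (intro Max_in) auto
  then obtain r where r: "r \<in> set L" "wins R L r = m" by auto
  have "\<forall>v\<in>set L. wins R L v \<le> m" unfolding m_def by auto
  hence ex: "\<exists>r. r \<in> set L \<and> (\<forall>v\<in>set L. wins R L v \<le> wins R L r)" using r by auto
  show ?thesis unfolding pick_def using someI_ex[OF ex] ne by simp
qed

definition king :: "nat list \<Rightarrow> nat prog" where
  "king L = bindp (rr L) (\<lambda>R. Ret (pick R L))"

lemma king_spec:
  assumes e: "ex x (king L) r c" and ne: "L \<noteq> []"
  shows "c \<le> (length L)^2 \<and> r \<in> set L \<and> (\<forall>y\<in>set L. x y \<le> x r + 2)"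
proof -
  from ex_bind[OF e[unfolded king_def]] obtain R c1 c2 where h1: "ex x (rr L) R c1"
    and h2: "ex x (Ret (pick R L)) r c2" and c: "c = c1 + c2" by auto
  have r: "r = pick R L" "c2 = 0" using h2 by (auto elim: ex_RetE)
  note A = rr_spec[OF h1]
  note P = pick_prop[OF ne, of R]
  have "\<forall>y\<in>set L. x y \<le> x r + 2"
  proof (rule ccontr)
    assume "\<not> ?thesis"
    then obtain y where y: "y \<in> set L" "x y > x r + 2" by force
    have rL: "r \<in> set L" using P r by simp
    have yr: "y \<noteq> r" using y by auto
    have "(y,r) \<in> set R"
    proof (rule ccontr)
      assume "(y,r) \<notin> set R"
      hence "(r,y) \<in> set R" using A y rL yr unfolding ttotal_def by blast
      hence "x y \<le> x r + 1" using A unfolding sound_def by blast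
      thus False using y by simp
    qed
    define Wr where "Wr = {u\<in>set L. u \<noteq> r \<and> (r,u) \<in> set R}"
    define Wy where "Wy = {u\<in>set L. u \<noteq> y \<and> (y,u) \<in> set R}"
    have sub: "insert r Wr \<subseteq> Wy"
    proof
      fix u assume u: "u \<in> insert r Wr"
      show "u \<in> Wy"
      proof (cases "u = r")
        case True then show ?thesis using \<open>(y,r) \<in> set R\<close> rL yr unfolding Wy_def by auto
      next
        case False
        hence u': "u \<in> set L" "(r,u) \<in> set R" using u unfolding Wr_def by auto
        hence xu: "x u \<le> x r + 1" using A unfolding sound_def by blast
        hence uy: "u \<noteq> y" using y by auto
        have "(u,y) \<notin> set R"
        proof
          assume "(u,y) \<in> set R"
          hence "x y \<le> x u + 1" using A unfolding sound_def by blast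
          thus False using xu y by simp
        qed
        hence "(y,u) \<in> set R" using A u' y uy unfolding ttotal_def by blast
        then show ?thesis using u' uy unfolding Wy_def by auto
      qed
    qed
    have "r \<notin> Wr" unfolding Wr_def by auto
    hence "card (insert r Wr) = Suc (card Wr)" unfolding Wr_def by simp
    moreover have "card (insert r Wr) \<le> card Wy" using sub unfolding Wy_def by (intro card_mono) auto
    moreover have "card Wy \<le> card Wr" using P y r unfolding wins_def Wy_def Wr_def by simp
    ultimately show False by simp
  qed
  then show ?thesis using A c r P by simp
qed

lemma inb_king: "set L \<subseteq> {..<n} \<Longrightarrow> 0 < n \<Longrightarrow> inb n (\<lambda>r. r < n) (king L)"
  unfolding king_def
  by (rule inb_bind[OF inb_rr]) (use pick_prop in \<open>auto simp: pick_def\<close>)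



definition kk :: "nat \<Rightarrow> nat" where "kk j = 2^(j+3) + 2*j + 9"

lemma kk_ge: "j < 2^(kk j)"
proof -
  have "j < 2^j" by (rule less_exp)
  also have "2^j \<le> (2::nat)^(kk j)" by (intro power_increasing) (auto simp: kk_def)
  finally show ?thesis .
qed

lemma kk_mono: "kk j \<le> kk (j + t)"
proof -
  have "(2::nat)^(j+3) \<le> 2^(j+t+3)" by (intro power_increasing) auto
  moreover have "2*j \<le> 2*(j+t)" by simp
  ultimately show ?thesis unfolding kk_def by (intro add_mono order_refl) 
qed

lemma kk_big: "2^(j+3) \<le> kk j" unfolding kk_def by simp

lemma kk_rec: "4 * (kk j + 1) * 2^(kk (Suc j)) \<le> 2^(kk j) * 2^(kk j)"
proof -
  define a :: nat where "a = 2^j"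
  have ja: "j < a" unfolding a_def by (rule less_exp)
  have a1: "1 \<le> a" unfolding a_def by simp
  have e: "kk j + kk j = kk (Suc j) + (2*j + 7)" unfolding kk_def by (simp add: power_add)
  have jj: "2*j+7 = j + j + 7" by simp
  have p: "(2::nat)^(2*j+7) = 128 * a * a" unfolding a_def jj power_add by simp
  have k: "kk j + 1 = 8 * a + 2*j + 10" unfolding kk_def a_def by (simp add: power_add)
  have "4 * (kk j + 1) \<le> (2::nat)^(2*j+7)"
  proof -
    have "4 * (kk j + 1) = 32 * a + 8 * j + 40" using k by simp
    also have "\<dots> \<le> 80 * a" using ja a1 by linarith
    also have "\<dots> \<le> 128 * a * a" using a1 by (simp add: mult_le_mono2)
    finally show ?thesis using p by simp
  qed
  hence "4 * (kk j + 1) * 2^(kk (Suc j)) \<le> 2^(2*j+7) * 2^(kk (Suc j))" by simp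
  also have "\<dots> = 2^(kk j + kk j)" using e by (simp add: power_add)
  finally show ?thesis by (simp add: power_add)
qed

primrec alg :: "nat \<Rightarrow> nat \<Rightarrow> nat list \<Rightarrow> nat prog" where
  "alg 0 j L = king L"
| "alg (Suc f) j L = (if length L \<le> 2^(kk j) then king L
     else bindp (lev (kk j) (chunks (2^(kk j) - 1) L)) (\<lambda>S. alg f (Suc j) S))"

lemma king_case:
  assumes e: "ex x (king L) r c" and ne: "L \<noteq> []" and l: "length L \<le> 2^(kk j)"
  shows "c \<le> 2 * length L * 2^(kk j) \<and> r \<in> set L \<and>
     (\<forall>t. length L \<le> 2^(kk (j+t)) \<longrightarrow> (\<forall>y\<in>set L. x y \<le> x r + real t + 2))"
proof -
  note K = king_spec[OF e ne]
  have "c \<le> length L * length L" using K by (simp add: power2_eq_square)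
  also have "\<dots> \<le> length L * 2^(kk j)" using l by simp
  also have "\<dots> \<le> 2 * length L * 2^(kk j)" by simp
  finally show ?thesis using K by force
qed

lemma alg_spec:
  "ex x (alg f j L) r c \<Longrightarrow> length L \<le> j + f \<Longrightarrow> L \<noteq> [] \<Longrightarrow>
   c \<le> 2 * length L * 2^(kk j) \<and> r \<in> set L \<and>
     (\<forall>t. length L \<le> 2^(kk (j+t)) \<longrightarrow> (\<forall>y\<in>set L. x y \<le> x r + real t + 2))"
proof (induction f arbitrary: j L r c)
  case 0
  have "length L \<le> 2^(kk j)" using 0 kk_ge[of j] by simp
  then show ?case using king_case 0 by simp
next
  case (Suc f)
  show ?case
  proof (cases "length L \<le> 2^(kk j)")
    case True then show ?thesis using king_case Suc.prems by simp
  next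
    case False
    define k where "k = kk j"
    define g :: nat where "g = 2^k"
    define m where "m = length L"
    define Cs where "Cs = chunks (g - 1) L"
    have g1: "Suc (g - 1) = g" unfolding g_def by simp
    have mg: "g < m" using False unfolding m_def g_def k_def by simp
    from Suc.prems(1) False have e: "ex x (bindp (lev k Cs) (\<lambda>S. alg f (Suc j) S)) r c"
      unfolding Cs_def g_def k_def by simp
    from ex_bind[OF e] obtain S c1 c2 where h1: "ex x (lev k Cs) S c1"
      and h2: "ex x (alg f (Suc j) S) r c2" and c: "c = c1 + c2" by auto
    have clen: "\<forall>Ch\<in>set Cs. length Ch \<le> 2^k" using chunks_len[of _ "g-1" L] g1 unfolding Cs_def g_def by auto
    have cc: "concat Cs = L" unfolding Cs_def by (rule concat_chunks)
    note Lv = lev_spec[OF h1 clen, unfolded cc]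
    have Sne: "S \<noteq> []"
    proof -
      obtain v where "v \<in> set L" using Suc.prems(3) by (cases L) auto
      then show ?thesis using Lv by auto
    qed
    have lS: "length S \<le> Suc j + f" using Lv Suc.prems(2) by simp
    note IH = Suc.IH[OF h2 lS Sne]
    have nc: "length Cs * g \<le> m + (g - 1)" using chunks_num[of "g-1" L] g1 unfolding Cs_def m_def by simp
    hence nc2: "length Cs * g \<le> 2 * m" using mg by simp
    have "length S * g \<le> length Cs * Suc k * g" using Lv by simp
    also have "\<dots> = (length Cs * g) * Suc k" by (simp add: algebra_simps)
    also have "\<dots> \<le> 2 * m * Suc k" using nc2 by (rule mult_right_mono) simp
    finally have sg: "length S * g \<le> 2 * m * Suc k" .
    have "(2 * length S * 2^(kk (Suc j))) * g = 2 * (length S * g) * 2^(kk (Suc j))" by simp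
    also have "\<dots> \<le> 2 * (2 * m * Suc k) * 2^(kk (Suc j))" using sg by simp
    also have "\<dots> = m * (4 * (kk j + 1) * 2^(kk (Suc j)))" unfolding k_def by (simp add: algebra_simps)
    also have "\<dots> \<le> m * (g * g)" using kk_rec[of j] unfolding g_def k_def by simp
    finally have X: "(2 * length S * 2^(kk (Suc j))) * g \<le> m * (g * g)" .
    hence "(2 * length S * 2^(kk (Suc j))) * g \<le> (m * g) * g" by (simp only: mult.assoc)
    moreover have gp: "0 < g" unfolding g_def by simp
    ultimately have c2b: "2 * length S * 2^(kk (Suc j)) \<le> m * g"
      by (meson mult_le_cancel2)
    have c1b: "c1 \<le> g * m" using Lv unfolding g_def m_def by simp
    have "c2 \<le> 2 * length S * 2^(kk (Suc j))" using IH by blast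
    hence "c \<le> g * m + m * g" using c c1b c2b by linarith
    hence cost: "c \<le> 2 * length L * 2^(kk j)" unfolding m_def g_def k_def by (simp add: algebra_simps)
    have rL: "r \<in> set L" using IH Lv by auto
    have depth: "\<forall>t. length L \<le> 2^(kk (j+t)) \<longrightarrow> (\<forall>y\<in>set L. x y \<le> x r + real t + 2)"
    proof (intro allI impI ballI)
      fix t y assume lt: "length L \<le> 2^(kk (j+t))" and y: "y \<in> set L"
      have "t \<noteq> 0" using lt False by (cases t) auto
      then obtain t' where t: "t = Suc t'" by (cases t) auto
      have "length S \<le> 2^(kk (Suc j + t'))" using Lv lt t by simp
      hence I: "\<forall>y\<in>set S. x y \<le> x r + real t' + 2" using IH by blast
      obtain u where "u \<in> set S" "x y \<le> x u + 1" using Lv y by blast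
      then show "x y \<le> x r + real t + 2" using I t by fastforce
    qed
    show ?thesis using cost rL depth by blast
  qed
qed

lemma inb_alg: "set L \<subseteq> {..<n} \<Longrightarrow> 0 < n \<Longrightarrow> inb n (\<lambda>r. r < n) (alg f j L)"
proof (induction f arbitrary: j L)
  case 0 then show ?case by (simp add: inb_king)
next
  case (Suc f)
  have "\<forall>Ch\<in>set (chunks (2^(kk j) - 1) L). set Ch \<subseteq> set (concat (chunks (2^(kk j) - 1) L))"
    by auto
  hence "\<forall>Ch\<in>set (chunks (2^(kk j) - 1) L). set Ch \<subseteq> {..<n}"
    using Suc.prems(1) unfolding concat_chunks by blast
  then show ?case using Suc by (auto simp: inb_king intro!: inb_bind[OF inb_lev])
qed



lemma num_t:
  assumes n: "16 \<le> n"
  shows "\<exists>t. n \<le> 2^(kk t) \<and> real t + 2 \<le> log 2 (log 2 (real n))"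
proof -
  define l where "l = log 2 (log 2 (real n))"
  have "log 2 (16::real) \<le> log 2 (real n)" using n by (subst log_le_cancel_iff) auto
  moreover have "log 2 ((2::real)^4) = 4" using log_pow_cancel[of "2::real" 4] by simp
  hence "log 2 (16::real) = 4" by simp
  ultimately have l4: "4 \<le> log 2 (real n)" by simp
  have "log 2 (4::real) \<le> l" unfolding l_def using l4 by (subst log_le_cancel_iff) auto
  moreover have "log 2 ((2::real)^2) = 2" using log_pow_cancel[of "2::real" 2] by simp
  hence "log 2 (4::real) = 2" by simp
  ultimately have l2: "2 \<le> l" by simp
  define t where "t = nat (\<lfloor>l\<rfloor> - 2)"
  have fl: "2 \<le> \<lfloor>l\<rfloor>" using l2 by linarith
  have ti: "int t + 2 = \<lfloor>l\<rfloor>" unfolding t_def using fl by simp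
  have tl: "real t + 2 = of_int \<lfloor>l\<rfloor>"
  proof -
    have "real_of_int (int t + 2) = real_of_int \<lfloor>l\<rfloor>" using ti by simp
    then show ?thesis by simp
  qed
  have t1: "real t + 2 \<le> l" using tl by linarith
  have t2: "l < real t + 3" using tl by linarith
  have "log 2 (real n) < 2 powr (real t + 3)"
    using t2 l4 unfolding l_def by (subst log_less_iff[symmetric]) auto
  also have "2 powr (real t + 3) = real (2^(t+3))"
    by (simp add: powr_realpow[symmetric])
  finally have "real n < 2 powr real (2^(t+3))"
    using n by (subst log_less_iff[symmetric]) auto
  also have "\<dots> = real (2^(2^(t+3)))" by (simp add: powr_realpow[symmetric])
  finally have "n < 2^(2^(t+3))" by linarith
  also have "(2::nat)^(2^(t+3)) \<le> 2^(kk t)" using kk_big[of t] by (intro power_increasing) auto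
  finally have "n \<le> 2^(kk t)" by simp
  then show ?thesis using t1 unfolding l_def by blast
qed

theorem mainTheorem7:
  shows "\<exists>A :: nat \<Rightarrow> ctree. \<exists>C :: real. \<exists>N :: nat.
           \<forall>n \<ge> N. valid_tree n (A n) \<and>
             (\<forall>x :: nat \<Rightarrow> real. \<forall>k c. run x (A n) k c \<longrightarrow>
               real c \<le> C * real n \<and>
               x k \<ge> (MAX i\<in>{..<n}. x i) - log 2 (log 2 (real n)))"
proof (intro exI allI impI conjI)
  fix n :: nat assume n: "16 \<le> n"
  show "valid_tree n (to_tree (alg n 0 [0..<n]))"
    using n by (intro inb_valid inb_alg) auto
  fix x k c assume r: "run x (to_tree (alg n 0 [0..<n])) k c"
  have S: "c \<le> 2 * length [0..<n] * 2^(kk 0) \<and> k \<in> set [0..<n] \<and>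
     (\<forall>t. length [0..<n] \<le> 2^(kk (0+t)) \<longrightarrow> (\<forall>y\<in>set [0..<n]. x y \<le> x k + real t + 2))"
    using alg_spec[OF run_ex[OF r]] n by simp
  have "kk 0 = 17" unfolding kk_def by simp
  hence "c \<le> 2 * 2^17 * n" using S by simp
  hence "real c \<le> real (2 * 2^17 * n)" by linarith
  thus "real c \<le> 2 * 2^17 * real n" by simp
  obtain t where t: "n \<le> 2^(kk t)" "real t + 2 \<le> log 2 (log 2 (real n))" using num_t[OF n] by blast
  have d: "\<forall>y<n. x y \<le> x k + real t + 2" using S t by auto
  have "(MAX i\<in>{..<n}. x i) \<in> x ` {..<n}" using n by (intro Max_in) (auto simp: lessThan_empty_iff)
  then obtain i where i: "i < n" "(MAX i\<in>{..<n}. x i) = x i" by auto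
  show "x k \<ge> (MAX i\<in>{..<n}. x i) - log 2 (log 2 (real n))"
    using d i t by fastforce
qed

end
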